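(* Let $p$ be a prime and let $G \cong \mathbb{Z}_{p^{e_1}}\oplus\mathbb{Z}_{p^{e_2}}\oplus\cdots\oplus\mathbb{Z}_{p^{e_l}}$, where $1\le e_1\le e_2\le\cdots\le e_l$ are integers, so $G$ has exponent $n=p^{e_l}$. Let $A$ be a non-empty subset of $]p^{e_l}[=\{1,2,\dots,p^{e_l}\}$ such that the elements of $A$ are pairwise incongruent modulo $p$ and none of them is divisible by $p$. Then \[ d_A(G)\le \left\lceil \frac{1}{|A|}\Big(1+\sum_{i=1}^{l}(p^{e_i}-1)\Big)\right\rceil . \]
   Context: For an integer $x\ge1$, $]x[=\{1,2,\dots,x\}$. Let $G$ be a finite abelian group (written additively) of exponent $n$ and let $\emptyset\ne A\subseteq\, ]n[$. The constant $d_A(G)$ is the least positive integer $t$ such that for every sequence $g_1,\dots,g_t$ of (not necessarily distinct) elements of $G$ there exist $\ell\ge1$, indices $1\le i_1<\dots<i_\ell\le t$ and elements $a_1,\dots,a_\ell\in A$ (repetitions allowed) with $\sum_{j=1}^{\ell}a_j g_{i_j}=0$ in $G$. $\lceil x\rceil$ denotes the smallest integer $\ge x$. *)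

theory Defs
  imports Complex_Main "HOL-Computational_Algebra.Primes"
begin

text \<open>The group G = Z_{m 0} + ... + Z_{m (l-1)} is represented concretely: an element is
  a vector g :: nat \<Rightarrow> int, where coordinate k (k < l) is read modulo m k.
  A sequence g_1..g_t of elements is a function g :: nat \<Rightarrow> nat \<Rightarrow> int,
  g i being the i-th term (i < t).\<close>

definition has_A_zero_sum ::
  "nat \<Rightarrow> (nat \<Rightarrow> nat) \<Rightarrow> nat set \<Rightarrow> nat \<Rightarrow> (nat \<Rightarrow> nat \<Rightarrow> int) \<Rightarrow> bool" where
  "has_A_zero_sum l m A t g \<longleftrightarrow>
     (\<exists>I a. I \<noteq> {} \<and> I \<subseteq> {0..<t} \<and> (\<forall>i\<in>I. a i \<in> A) \<and>
        (\<forall>k<l. int (m k) dvd (\<Sum>i\<in>I. int (a i) * g i k)))"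

definition dA :: "nat \<Rightarrow> (nat \<Rightarrow> nat) \<Rightarrow> nat set \<Rightarrow> nat" where
  "dA l m A = (LEAST t. t \<ge> 1 \<and> (\<forall>g. has_A_zero_sum l m A t g))"

end

theory Submission
  imports Defs "HOL-Number_Theory.Cong" "HOL-Computational_Algebra.Polynomial" "HOL-Library.FuncSet"
begin

lemma prime_power_dvd_choose:
  fixes p e i :: nat
  assumes p: "prime p" and i0: "0 < i" and iq: "i < p ^ e"
  shows "p dvd (p ^ e choose i)"
proof (rule ccontr)
  assume nd: "\<not> p dvd (p ^ e choose i)"
  have "coprime (p ^ e) (p ^ e choose i)"
    using nd p by (simp add: coprime_commute prime_imp_coprime)
  moreover have "p ^ e dvd i * (p ^ e choose i)"
    using times_binomial_minus1_eq[OF i0, of "p^e"] by simp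
  ultimately have "p ^ e dvd i"
    by (metis coprime_dvd_mult_left_iff)
  with i0 iq show False by (simp add: nat_dvd_not_less)
qed

lemma choose_shift_cong:
  fixes p e h j :: nat
  assumes p: "prime p" and j: "j < p ^ e"
  shows "[(h + p ^ e) choose j = h choose j] (mod p)"
proof -
  have "(h + p ^ e) choose j = (\<Sum>k\<le>j. (p ^ e choose k) * (h choose (j - k)))"
    using vandermonde[of "p^e" h j] by (simp add: add.commute)
  also have "[\<dots> = (\<Sum>k\<le>j. (if k = 0 then h choose j else 0))] (mod p)"
  proof (rule cong_sum)
    fix k assume k: "k \<in> {..j}"
    show "[(p ^ e choose k) * (h choose (j - k)) = (if k = 0 then h choose j else 0)] (mod p)"
    proof (cases "k = 0")
      case False
      then have "p dvd (p ^ e choose k)" using prime_power_dvd_choose[OF p, of k e] k j by auto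
      then show ?thesis using False by (simp add: cong_def)
    qed simp
  qed
  also have "(\<Sum>k\<le>j. (if k = 0 then h choose j else 0)) = h choose j"
    by (simp add: sum.delta)
  finally show ?thesis .
qed

lemma alt_sum_cong:
  fixes p e h :: nat
  assumes p: "prime p" and e: "1 \<le> e"
  shows "[(\<Sum>j<p^e. (-1)^j * int (h choose j)) = (if p ^ e dvd h then 1 else 0)] (mod int p)"
proof (induction h rule: less_induct)
  case (less h)
  define q where "q = p ^ e"
  have q1: "q > 1" using p e unfolding q_def
    using prime_gt_1_nat[OF p] by (intro one_less_power) auto
  show ?case
  proof (cases "h \<ge> q")
    case True
    define h' where "h' = h - q"
    have hh: "h = h' + q" using True h'_def by simp
    have "h' < h" using q1 hh by simp
    note IH = less[OF this]
    have C: "[(\<Sum>j<p^e. (-1)^j * int (h choose j)) = (\<Sum>j<p^e. (-1)^j * int (h' choose j))] (mod int p)"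
    proof (rule cong_sum)
      fix j assume "j \<in> {..<p^e}"
      then have "[h choose j = h' choose j] (mod p)"
        using choose_shift_cong[OF p, of j e h'] hh q_def by auto
      then have "[int (h choose j) = int (h' choose j)] (mod int p)"
        using cong_int_iff by blast
      then show "[(-1)^j * int (h choose j) = (-1)^j * int (h' choose j)] (mod int p)"
        by (rule cong_scalar_left)
    qed
    moreover have "(p ^ e dvd h) = (p ^ e dvd h')" using hh q_def by auto
    ultimately show ?thesis using cong_trans[OF C IH] by simp
  next
    case False
    show ?thesis
    proof (cases "h = 0")
      case True
      have "(\<Sum>j<p^e. (-1)^j * int (h choose j)) = (\<Sum>j<p^e. (if j = 0 then 1 else 0))"
        by (rule sum.cong) (auto simp: True)
      also have "\<dots> = 1" using q1 q_def prime_gt_0_nat[OF p] by (simp add: sum.delta)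
      finally have S1: "(\<Sum>j<p^e. (-1)^j * int (h choose j)) = 1" .
      show ?thesis unfolding S1 using True by simp
    next
      case False
      have "(\<Sum>j<p^e. (-1)^j * int (h choose j)) = (\<Sum>j\<le>h. (-1)^j * int (h choose j))"
      proof (rule sum.mono_neutral_right)
        show "{..h} \<subseteq> {..<p^e}" using \<open>\<not> q \<le> h\<close> q_def by auto
      next
        show "\<forall>i\<in>{..<p^e} - {..h}. (-1)^i * int (h choose i) = 0"
        proof
          fix i assume "i \<in> {..<p^e} - {..h}"
          then have "h < i" by simp
          then show "(-1)^i * int (h choose i) = 0" by (simp add: binomial_eq_0)
        qed
      qed simp
      also have "\<dots> = 0" using False by (intro choose_alternating_sum) simp
      finally have S0: "(\<Sum>j<p^e. (-1)^j * int (h choose j)) = 0" .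
      have "\<not> p ^ e dvd h"
      proof
        assume "p ^ e dvd h"
        then have "p ^ e \<le> h" using False by (intro dvd_imp_le) auto
        then show False using \<open>\<not> q \<le> h\<close> q_def by simp
      qed
      then show ?thesis unfolding S0 by simp
    qed
  qed
qed

lemma weights_exist:
  fixes p :: nat and A :: "nat set"
  assumes p: "prime p" and fin: "finite A"
    and dist: "\<forall>a\<in>A. \<forall>b\<in>A. a \<noteq> b \<longrightarrow> \<not> int p dvd (int a - int b)"
  shows "\<exists>c::nat \<Rightarrow> int. \<forall>j<card A. [(0::int)^j + (\<Sum>a\<in>A. c a * int a ^ j) = 0] (mod int p)"
  using fin dist
proof (induction A rule: finite_induct)
  case empty
  then show ?case by simp
next
  case (insert b A)
  from insert.prems have distA: "\<forall>a\<in>A. \<forall>b\<in>A. a \<noteq> b \<longrightarrow> \<not> int p dvd (int a - int b)" by blast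
  from insert.IH[OF distA] obtain c where
    c: "\<forall>j<card A. [(0::int)^j + (\<Sum>a\<in>A. c a * int a ^ j) = 0] (mod int p)" by blast
  define B where "B = int b"
  have pint: "prime (int p)" using p by simp
  have "\<forall>a\<in>A. \<exists>w. [(int a - B) * w = 1] (mod int p)"
  proof
    fix a assume a: "a \<in> A"
    then have "a \<noteq> b" using insert.hyps by auto
    then have "\<not> int p dvd (int a - B)" using insert.prems a B_def by auto
    then have "coprime (int a - B) (int p)"
      using pint by (simp add: coprime_commute prime_imp_coprime)
    then show "\<exists>w. [(int a - B) * w = 1] (mod int p)" by (rule cong_solve_coprime_int)
  qed
  then obtain v where v: "\<forall>a\<in>A. [(int a - B) * v a = 1] (mod int p)" by metis
  define c' where "c' x = (if x = b then -1 + B * (\<Sum>a\<in>A. c a * v a) else - B * c x * v x)" for x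
  show ?case
  proof (intro exI allI impI)
    fix j assume j: "j < card (insert b A)"
    then have jA: "j \<le> card A" using insert.hyps by simp
    define s where "s x = (\<Sum>m<j. B ^ (j - Suc m) * x ^ m)" for x :: int
    have sd: "x ^ j - B ^ j = (x - B) * s x" for x
      unfolding s_def by (rule power_diff_sumr2)
    have E1: "(0::int)^j + (\<Sum>x\<in>insert b A. c' x * int x ^ j)
        = ((0::int)^j - B^j) - B * (\<Sum>a\<in>A. c a * v a * (int a ^ j - B ^ j))"
    proof -
      have "(\<Sum>x\<in>insert b A. c' x * int x ^ j) = c' b * B ^ j + (\<Sum>a\<in>A. c' a * int a ^ j)"
        using insert.hyps B_def by simp
      also have "(\<Sum>a\<in>A. c' a * int a ^ j) = (\<Sum>a\<in>A. - B * c a * v a * int a ^ j)"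
        using insert.hyps by (intro sum.cong) (auto simp: c'_def)
      finally have X: "(\<Sum>x\<in>insert b A. c' x * int x ^ j) = c' b * B ^ j + (\<Sum>a\<in>A. - B * c a * v a * int a ^ j)" .
      have Y: "B * (\<Sum>a\<in>A. c a * v a * (int a ^ j - B ^ j)) =
          (\<Sum>a\<in>A. B * c a * v a * int a ^ j) - B * B ^ j * (\<Sum>a\<in>A. c a * v a)"
        by (simp add: sum_distrib_left sum_subtractf algebra_simps)
      have Z: "(\<Sum>a\<in>A. - B * c a * v a * int a ^ j) = - (\<Sum>a\<in>A. B * c a * v a * int a ^ j)"
        by (simp add: sum_negf[symmetric])
      show ?thesis unfolding X Y Z by (simp add: c'_def algebra_simps)
    qed
    have E2: "(\<Sum>a\<in>A. c a * v a * (int a ^ j - B ^ j)) = (\<Sum>a\<in>A. c a * ((int a - B) * v a) * s (int a))"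
      by (intro sum.cong) (auto simp: sd algebra_simps)
    have E3: "[(\<Sum>a\<in>A. c a * ((int a - B) * v a) * s (int a)) = (\<Sum>a\<in>A. c a * 1 * s (int a))] (mod int p)"
      using v by (intro cong_sum cong_mult cong_refl) auto
    have E4: "s 0 + (\<Sum>a\<in>A. c a * s (int a)) = (\<Sum>m<j. B ^ (j - Suc m) * ((0::int)^m + (\<Sum>a\<in>A. c a * int a ^ m)))"
      unfolding s_def by (simp add: sum_distrib_left sum_distrib_right sum.distrib sum.swap[of _ A] algebra_simps)
    have E5: "[(\<Sum>m<j. B ^ (j - Suc m) * ((0::int)^m + (\<Sum>a\<in>A. c a * int a ^ m))) = (\<Sum>m<j. B ^ (j - Suc m) * 0)] (mod int p)"
      using c jA by (intro cong_sum cong_mult cong_refl) auto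
    have "[(0::int)^j + (\<Sum>x\<in>insert b A. c' x * int x ^ j)
          = - B * (s 0 + (\<Sum>a\<in>A. c a * s (int a)))] (mod int p)"
    proof -
      have "(0::int)^j + (\<Sum>x\<in>insert b A. c' x * int x ^ j) = - B * s 0 - B * (\<Sum>a\<in>A. c a * ((int a - B) * v a) * s (int a))"
        unfolding E1 E2[symmetric] using sd[of 0] by simp
      also have "[\<dots> = - B * s 0 - B * (\<Sum>a\<in>A. c a * 1 * s (int a))] (mod int p)"
        by (intro cong_diff cong_mult cong_refl E3)
      also have "- B * s 0 - B * (\<Sum>a\<in>A. c a * 1 * s (int a)) = - B * (s 0 + (\<Sum>a\<in>A. c a * s (int a)))"
        by (simp add: algebra_simps)
      finally show ?thesis .
    qed
    also have "[- B * (s 0 + (\<Sum>a\<in>A. c a * s (int a))) = - B * 0] (mod int p)"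
      unfolding E4 using E5 by (intro cong_mult cong_refl) simp
    finally show "[(0::int)^j + (\<Sum>x\<in>insert b A. c' x * int x ^ j) = 0] (mod int p)" by simp
  qed
qed

lemma fact_choose_int: "int (fact k) * int (n choose k) = (\<Prod>i<k. int n - int i)"
proof -
  have "real_of_int (int (fact k) * int (n choose k)) = real_of_int (\<Prod>i<k. int n - int i)"
    by (simp add: binomial_gbinomial gbinomial_mult_fact atLeast0LessThan)
  then show ?thesis by (simp only: of_int_eq_iff)
qed

lemma interp:
  fixes p :: nat and A :: "nat set" and c :: "nat \<Rightarrow> int" and P :: "int poly"
  assumes c: "\<forall>j<card A. [(0::int)^j + (\<Sum>a\<in>A. c a * int a ^ j) = 0] (mod int p)"
    and d: "degree P < card A"
  shows "[poly P 0 + (\<Sum>a\<in>A. c a * poly P (int a)) = 0] (mod int p)"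
proof -
  have "poly P 0 + (\<Sum>a\<in>A. c a * poly P (int a))
      = (\<Sum>i\<le>degree P. coeff P i * ((0::int)^i + (\<Sum>a\<in>A. c a * int a ^ i)))"
    by (simp add: poly_altdef[of P] sum_distrib_left sum_distrib_right sum.distrib
        sum.swap[of _ A] algebra_simps)
  also have "[\<dots> = (\<Sum>i\<le>degree P. coeff P i * 0)] (mod int p)"
    using c d by (intro cong_sum cong_mult cong_refl) auto
  finally show ?thesis by simp
qed

lemma T_cong:
  fixes p l :: nat and A :: "nat set" and c :: "nat \<Rightarrow> int" and r :: "nat \<Rightarrow> nat"
    and \<gamma> :: "nat \<Rightarrow> nat"
  assumes p: "prime p" and cardp: "card A \<le> p"
    and c: "\<forall>j<card A. [(0::int)^j + (\<Sum>a\<in>A. c a * int a ^ j) = 0] (mod int p)"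
    and sm: "(\<Sum>k<l. \<gamma> k) < card A"
  shows "[(if \<forall>k<l. \<gamma> k = 0 then 1 else 0) + (\<Sum>a\<in>A. c a * (\<Prod>k<l. int (a * r k choose \<gamma> k))) = 0] (mod int p)"
proof -
  define PK where "PK k = (\<Prod>i<\<gamma> k. [:- int i, int (r k):])" for k
  define PP where "PP = (\<Prod>k<l. PK k)"
  define D where "D = (\<Prod>k<l. int (fact (\<gamma> k)))"
  have degPK: "degree (PK k) \<le> \<gamma> k" for k
  proof -
    have "degree (PK k) \<le> sum (degree \<circ> (\<lambda>i. [:- int i, int (r k):])) {..<\<gamma> k}"
      unfolding PK_def by (rule degree_prod_sum_le) simp
    also have "\<dots> \<le> (\<Sum>i<\<gamma> k. 1)"
    proof (intro sum_mono)
      fix i show "(degree \<circ> (\<lambda>i. [:- int i, int (r k):])) i \<le> 1"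
        using degree_pCons_le[of "- int i" "[:int (r k):]"] by simp
    qed
    finally show ?thesis by simp
  qed
  have "degree PP \<le> sum (degree \<circ> PK) {..<l}"
    unfolding PP_def by (rule degree_prod_sum_le) simp
  also have "\<dots> = (\<Sum>k<l. degree (PK k))" by simp
  also have "\<dots> \<le> (\<Sum>k<l. \<gamma> k)" by (intro sum_mono degPK)
  finally have degPP: "degree PP < card A" using sm by simp
  have polyPK: "poly (PK k) x = (\<Prod>i<\<gamma> k. x * int (r k) - int i)" for k x
    unfolding PK_def by (simp add: poly_prod algebra_simps)
  have polyA: "poly PP (int a) = D * (\<Prod>k<l. int (a * r k choose \<gamma> k))" for a
  proof -
    have "poly PP (int a) = (\<Prod>k<l. int (fact (\<gamma> k)) * int (a * r k choose \<gamma> k))"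
      unfolding PP_def poly_prod polyPK fact_choose_int by simp
    then show ?thesis unfolding D_def by (simp add: prod.distrib)
  qed
  have poly0: "poly PP 0 = D * (if \<forall>k<l. \<gamma> k = 0 then 1 else 0)"
  proof (cases "\<forall>k<l. \<gamma> k = 0")
    case True
    then show ?thesis unfolding PP_def D_def poly_prod polyPK by simp
  next
    case False
    then obtain k where k: "k < l" "\<gamma> k \<noteq> 0" by blast
    have "poly (PK k) 0 = 0" unfolding polyPK using k by (intro prod_zero) auto
    then have "poly PP 0 = 0" unfolding PP_def poly_prod using k by (intro prod_zero) auto
    then show ?thesis using False by (simp only: if_False mult_zero_right)
  qed
  have "[poly PP 0 + (\<Sum>a\<in>A. c a * poly PP (int a)) = 0] (mod int p)"
    by (rule interp[OF c degPP])
  then have "[D * ((if \<forall>k<l. \<gamma> k = 0 then 1 else 0) + (\<Sum>a\<in>A. c a * (\<Prod>k<l. int (a * r k choose \<gamma> k)))) = 0] (mod int p)"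
    unfolding poly0 polyA by (simp add: algebra_simps sum_distrib_left)
  then have dv: "int p dvd D * ((if \<forall>k<l. \<gamma> k = 0 then 1 else 0) + (\<Sum>a\<in>A. c a * (\<Prod>k<l. int (a * r k choose \<gamma> k))))"
    by (simp add: cong_0_iff)
  have pint: "prime (int p)" using p by simp
  have "\<not> int p dvd D"
  proof
    assume "int p dvd D"
    then have "\<exists>k\<in>{..<l}. int p dvd int (fact (\<gamma> k))"
      unfolding D_def by (subst (asm) prime_dvd_prod_iff[OF _ pint]) auto
    then obtain k where k: "k \<in> {..<l}" "int p dvd int (fact (\<gamma> k))" by blast
    then have "p dvd fact (\<gamma> k)" by (simp only: int_dvd_int_iff)
    then have "p \<le> \<gamma> k" using prime_dvd_fact_iff[OF p] by simp
    moreover have "\<gamma> k \<le> (\<Sum>k<l. \<gamma> k)" using k by (intro member_le_sum) auto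
    ultimately show False using sm cardp by simp
  qed
  with dv pint have "int p dvd ((if \<forall>k<l. \<gamma> k = 0 then 1 else 0) + (\<Sum>a\<in>A. c a * (\<Prod>k<l. int (a * r k choose \<gamma> k))))"
    by (simp add: prime_dvd_mult_iff)
  then show ?thesis by (simp add: cong_0_iff)
qed

context
  fixes l :: nat and A0 :: "nat set" and \<omega> :: "nat \<Rightarrow> int" and r :: "nat \<Rightarrow> nat \<Rightarrow> nat"
begin

primrec FF :: "nat \<Rightarrow> (nat \<Rightarrow> nat) \<Rightarrow> (nat \<Rightarrow> nat) \<Rightarrow> int" where
  "FF 0 u \<alpha> = (\<Prod>k<l. int (u k choose \<alpha> k))"
| "FF (Suc s) u \<alpha> = (\<Sum>x\<in>A0. \<omega> x * FF s (\<lambda>k. u k + x * r s k) \<alpha>)"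

lemma FF_shift:
  "FF s (\<lambda>k. u k + y k) \<alpha> =
    (\<Sum>\<beta>\<in>PiE {..<l} (\<lambda>k. {..\<alpha> k}). FF s u \<beta> * (\<Prod>k<l. int (y k choose (\<alpha> k - \<beta> k))))"
proof (induction s arbitrary: u)
  case 0
  have "FF 0 (\<lambda>k. u k + y k) \<alpha> = (\<Prod>k<l. \<Sum>b\<le>\<alpha> k. int (u k choose b) * int (y k choose (\<alpha> k - b)))"
    unfolding FF.simps
  proof (rule prod.cong[OF refl])
    fix k
    show "int (u k + y k choose \<alpha> k) = (\<Sum>b\<le>\<alpha> k. int (u k choose b) * int (y k choose (\<alpha> k - b)))"
      unfolding vandermonde[of "u k" "y k" "\<alpha> k", symmetric] by (simp only: of_nat_sum of_nat_mult)
  qed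
  also have "\<dots> = (\<Sum>\<beta>\<in>PiE {..<l} (\<lambda>k. {..\<alpha> k}). \<Prod>k<l. int (u k choose \<beta> k) * int (y k choose (\<alpha> k - \<beta> k)))"
    by (rule prod_sum_PiE) auto
  also have "\<dots> = (\<Sum>\<beta>\<in>PiE {..<l} (\<lambda>k. {..\<alpha> k}). FF 0 u \<beta> * (\<Prod>k<l. int (y k choose (\<alpha> k - \<beta> k))))"
    by (simp add: prod.distrib)
  finally show ?case .
next
  case (Suc s)
  have "FF (Suc s) (\<lambda>k. u k + y k) \<alpha> = (\<Sum>x\<in>A0. \<omega> x * FF s (\<lambda>k. (u k + x * r s k) + y k) \<alpha>)"
    unfolding FF.simps(2)
  proof (rule sum.cong[OF refl])
    fix x
    have "(\<lambda>k. u k + y k + x * r s k) = (\<lambda>k. (u k + x * r s k) + y k)" by (rule ext) (simp add: add_ac)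
    then show "\<omega> x * FF s (\<lambda>k. u k + y k + x * r s k) \<alpha> = \<omega> x * FF s (\<lambda>k. (u k + x * r s k) + y k) \<alpha>"
      by (simp only:)
  qed
  also have "\<dots> = (\<Sum>x\<in>A0. \<omega> x * (\<Sum>\<beta>\<in>PiE {..<l} (\<lambda>k. {..\<alpha> k}). FF s (\<lambda>k. u k + x * r s k) \<beta> * (\<Prod>k<l. int (y k choose (\<alpha> k - \<beta> k)))))"
  proof (rule sum.cong[OF refl])
    fix x
    show "\<omega> x * FF s (\<lambda>k. (u k + x * r s k) + y k) \<alpha> = \<omega> x * (\<Sum>\<beta>\<in>PiE {..<l} (\<lambda>k. {..\<alpha> k}). FF s (\<lambda>k. u k + x * r s k) \<beta> * (\<Prod>k<l. int (y k choose (\<alpha> k - \<beta> k))))"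
      using Suc.IH[of "\<lambda>k. u k + x * r s k"] by (simp only:)
  qed
  also have "\<dots> = (\<Sum>\<beta>\<in>PiE {..<l} (\<lambda>k. {..\<alpha> k}). FF (Suc s) u \<beta> * (\<Prod>k<l. int (y k choose (\<alpha> k - \<beta> k))))"
    unfolding sum_distrib_left FF.simps sum_distrib_right
    by (subst sum.swap) (rule sum.cong[OF refl], rule sum.cong[OF refl], simp only: mult.assoc)
  finally show ?case .
qed

lemma FF_val:
  fixes m :: int and n :: nat
  assumes Tz: "\<And>s \<gamma>. (\<Sum>k<l. \<gamma> k) < n \<Longrightarrow>
      [(\<Sum>x\<in>A0. \<omega> x * (\<Prod>k<l. int (x * r s k choose \<gamma> k))) = 0] (mod m)"
  shows "(\<Sum>k<l. \<alpha> k) < s * n \<Longrightarrow> [FF s u \<alpha> = 0] (mod m)"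
proof (induction s arbitrary: u \<alpha>)
  case 0
  then show ?case by simp
next
  case (Suc s)
  have "FF (Suc s) u \<alpha> = (\<Sum>x\<in>A0. \<omega> x * (\<Sum>\<beta>\<in>PiE {..<l} (\<lambda>k. {..\<alpha> k}). FF s u \<beta> * (\<Prod>k<l. int (x * r s k choose (\<alpha> k - \<beta> k)))))"
  proof -
    have eq: "FF s (\<lambda>k. u k + x * r s k) \<alpha> = (\<Sum>\<beta>\<in>PiE {..<l} (\<lambda>k. {..\<alpha> k}). FF s u \<beta> * (\<Prod>k<l. int (x * r s k choose (\<alpha> k - \<beta> k))))" for x
      using FF_shift[of s u "\<lambda>k. x * r s k" \<alpha>] by simp
    show ?thesis by (simp only: FF.simps eq)
  qed
  also have "\<dots> = (\<Sum>\<beta>\<in>PiE {..<l} (\<lambda>k. {..\<alpha> k}). FF s u \<beta> * (\<Sum>x\<in>A0. \<omega> x * (\<Prod>k<l. int (x * r s k choose (\<alpha> k - \<beta> k)))))"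
    unfolding sum_distrib_left
    by (subst sum.swap) (rule sum.cong[OF refl], rule sum.cong[OF refl], simp only: mult.left_commute)
  also have "[\<dots> = (\<Sum>\<beta>\<in>PiE {..<l} (\<lambda>k. {..\<alpha> k}). 0)] (mod m)"
  proof (rule cong_sum)
    fix \<beta> assume \<beta>: "\<beta> \<in> PiE {..<l} (\<lambda>k. {..\<alpha> k})"
    have "(\<Sum>k<l. \<beta> k) + (\<Sum>k<l. \<alpha> k - \<beta> k) = (\<Sum>k<l. \<alpha> k)"
    proof -
      have bk: "\<beta> k \<le> \<alpha> k" if "k \<in> {..<l}" for k
        using \<beta> that by (simp add: PiE_iff)
      show ?thesis unfolding sum.distrib[symmetric] by (rule sum.cong[OF refl]) (simp add: bk)
    qed
    moreover have "(\<Sum>k<l. \<alpha> k) < n + s * n" using Suc.prems by simp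
    ultimately consider "(\<Sum>k<l. \<beta> k) < s * n" | "(\<Sum>k<l. \<alpha> k - \<beta> k) < n"
      by linarith
    then show "[FF s u \<beta> * (\<Sum>x\<in>A0. \<omega> x * (\<Prod>k<l. int (x * r s k choose (\<alpha> k - \<beta> k)))) = 0] (mod m)"
    proof cases
      case 1
      then have "[FF s u \<beta> = 0] (mod m)" by (rule Suc.IH)
      then have "[FF s u \<beta> * (\<Sum>x\<in>A0. \<omega> x * (\<Prod>k<l. int (x * r s k choose (\<alpha> k - \<beta> k)))) = 0 * (\<Sum>x\<in>A0. \<omega> x * (\<Prod>k<l. int (x * r s k choose (\<alpha> k - \<beta> k))))] (mod m)"
        by (rule cong_mult[OF _ cong_refl])
      then show ?thesis by simp
    next
      case 2
      then have "[(\<Sum>x\<in>A0. \<omega> x * (\<Prod>k<l. int (x * r s k choose (\<alpha> k - \<beta> k)))) = 0] (mod m)"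
        by (rule Tz)
      then have "[FF s u \<beta> * (\<Sum>x\<in>A0. \<omega> x * (\<Prod>k<l. int (x * r s k choose (\<alpha> k - \<beta> k)))) = FF s u \<beta> * 0] (mod m)"
        by (rule cong_mult[OF cong_refl])
      then show ?thesis by simp
    qed
  qed
  finally show ?case by simp
qed

end

definition GG where
  "GG l A0 \<omega> r q s u = (\<Sum>\<alpha>\<in>PiE {..<l} (\<lambda>k. {..<q k}). (-1)^(\<Sum>k<l. \<alpha> k) * FF l A0 \<omega> r s u \<alpha>)"

lemma GG_Suc:
  "GG l A0 \<omega> r q (Suc s) u = (\<Sum>x\<in>A0. \<omega> x * GG l A0 \<omega> r q s (\<lambda>k. u k + x * r s k))"
  unfolding GG_def FF.simps(2) sum_distrib_left
  by (subst sum.swap) (rule sum.cong[OF refl], rule sum.cong[OF refl], simp only: mult.left_commute)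

lemma GG_0:
  "GG l A0 \<omega> r q 0 u = (\<Prod>k<l. \<Sum>j<q k. (-1)^j * int (u k choose j))"
proof -
  have "(\<Prod>k<l. \<Sum>j<q k. (-1)^j * int (u k choose j))
      = (\<Sum>\<alpha>\<in>PiE {..<l} (\<lambda>k. {..<q k}). \<Prod>k<l. (-1)^(\<alpha> k) * int (u k choose \<alpha> k))"
    by (rule prod_sum_PiE) auto
  also have "\<dots> = GG l A0 \<omega> r q 0 u"
    unfolding GG_def FF.simps(1)
    by (rule sum.cong[OF refl]) (simp only: prod.distrib power_sum)
  finally show ?thesis by simp
qed

lemma prod_indicator:
  fixes l :: nat
  shows   "(\<Prod>k<l. (if P k then 1 else 0 :: int)) = (if \<forall>k<l. P k then 1 else 0)"
proof (cases "\<forall>k<l. P k")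
  case True
  then show ?thesis by simp
next
  case False
  then obtain k where "k < l" "\<not> P k" by blast
  then have "(\<Prod>k<l. (if P k then 1 else 0 :: int)) = 0" by (intro prod_zero) auto
  then show ?thesis using False by simp
qed

lemma GG_inv:
  fixes m :: int
  assumes A0: "A0 = insert 0 A" and A0n: "0 \<notin> A" and finA: "finite A" and w0: "\<omega> 0 = 1"
    and Phi: "\<And>k h. k < l \<Longrightarrow> [(\<Sum>j<q k. (-1)^j * int (h choose j)) = (if q k dvd h then 1 else 0)] (mod m)"
  shows "(\<forall>w. (\<forall>i<s. w i \<in> A0) \<longrightarrow> (\<forall>k<l. q k dvd (u k + (\<Sum>i<s. w i * r i k))) \<longrightarrow> (\<forall>i<s. w i = 0))
     \<Longrightarrow> [GG l A0 \<omega> r q s u = (if \<forall>k<l. q k dvd u k then 1 else 0)] (mod m)"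
proof (induction s arbitrary: u)
  case 0
  have "[GG l A0 \<omega> r q 0 u = (\<Prod>k<l. (if q k dvd u k then 1 else 0))] (mod m)"
    unfolding GG_0 by (rule cong_prod) (rule Phi, simp)
  then show ?case by (simp only: prod_indicator)
next
  case (Suc s)
  note K = Suc.prems
  have Ks: "\<forall>w. (\<forall>i<s. w i \<in> A0) \<longrightarrow> (\<forall>k<l. q k dvd (u k + (\<Sum>i<s. w i * r i k))) \<longrightarrow> (\<forall>i<s. w i = 0)"
  proof (intro allI impI)
    fix w i assume w: "\<forall>i<s. w i \<in> A0" and d: "\<forall>k<l. q k dvd (u k + (\<Sum>i<s. w i * r i k))" and i: "i < s"
    define w' where "w' = w(s := 0)"
    have w'A: "\<forall>i<Suc s. w' i \<in> A0" using w A0 unfolding w'_def by (auto simp: less_Suc_eq)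
    have "(\<Sum>i<Suc s. w' i * r i k) = (\<Sum>i<s. w i * r i k)" for k
      unfolding w'_def by (simp add: sum.lessThan_Suc)
    then have dd: "\<forall>k<l. q k dvd (u k + (\<Sum>i<Suc s. w' i * r i k))" using d by simp
    have "\<forall>i<Suc s. w' i = 0" using mp[OF mp[OF spec[OF K, of w'] w'A] dd] .
    then have "w' i = 0" using i less_SucI by blast
    then show "w i = 0" using i unfolding w'_def by simp
  qed
  have IH0: "[GG l A0 \<omega> r q s u = (if \<forall>k<l. q k dvd u k then 1 else 0)] (mod m)"
    by (rule Suc.IH[OF Ks])
  have nodiv: "\<not> (\<forall>k<l. q k dvd (u k + a * r s k + (\<Sum>i<s. w i * r i k)))"
    if a: "a \<in> A" and w: "\<forall>i<s. w i \<in> A0" for a w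
  proof
    assume d: "\<forall>k<l. q k dvd (u k + a * r s k + (\<Sum>i<s. w i * r i k))"
    define w' where "w' = w(s := a)"
    have w'A: "\<forall>i<Suc s. w' i \<in> A0" using w A0 a unfolding w'_def by (auto simp: less_Suc_eq)
    have "(\<Sum>i<Suc s. w' i * r i k) = a * r s k + (\<Sum>i<s. w i * r i k)" for k
      unfolding w'_def by (simp add: sum.lessThan_Suc)
    then have dd: "\<forall>k<l. q k dvd (u k + (\<Sum>i<Suc s. w' i * r i k))" using d by (simp add: add.assoc)
    have "\<forall>i<Suc s. w' i = 0" using mp[OF mp[OF spec[OF K, of w'] w'A] dd] .
    then have "a = 0" unfolding w'_def by auto
    then show False using a A0n by simp
  qed
  have IHa: "[GG l A0 \<omega> r q s (\<lambda>k. u k + a * r s k) = 0] (mod m)" if a: "a \<in> A" for a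
  proof -
    have Ka: "\<forall>w. (\<forall>i<s. w i \<in> A0) \<longrightarrow> (\<forall>k<l. q k dvd (u k + a * r s k + (\<Sum>i<s. w i * r i k))) \<longrightarrow> (\<forall>i<s. w i = 0)"
      using nodiv[OF a] by blast
    have "[GG l A0 \<omega> r q s (\<lambda>k. u k + a * r s k) = (if \<forall>k<l. q k dvd (u k + a * r s k) then 1 else 0)] (mod m)"
      by (rule Suc.IH[of "\<lambda>k. u k + a * r s k", OF Ka])
    moreover have "\<not> (\<forall>k<l. q k dvd (u k + a * r s k))"
      using nodiv[OF a, of "\<lambda>_. 0"] A0 by simp
    ultimately show ?thesis by simp
  qed
  have eqG: "GG l A0 \<omega> r q (Suc s) u = \<omega> 0 * GG l A0 \<omega> r q s u + (\<Sum>a\<in>A. \<omega> a * GG l A0 \<omega> r q s (\<lambda>k. u k + a * r s k))"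
  proof -
    have sp: "(\<Sum>x\<in>A0. f x) = f 0 + (\<Sum>a\<in>A. f a)" for f :: "nat \<Rightarrow> int"
      using A0 A0n finA by simp
    have u0: "(\<lambda>k. u k + 0 * r s k) = u" by simp
    show ?thesis unfolding GG_Suc sp u0 ..
  qed
  have cg: "[\<omega> 0 * GG l A0 \<omega> r q s u + (\<Sum>a\<in>A. \<omega> a * GG l A0 \<omega> r q s (\<lambda>k. u k + a * r s k)) = 1 * (if \<forall>k<l. q k dvd u k then 1 else 0) + (\<Sum>a\<in>A. \<omega> a * 0)] (mod m)"
  proof (rule cong_add)
    show "[\<omega> 0 * GG l A0 \<omega> r q s u = 1 * (if \<forall>k<l. q k dvd u k then 1 else 0)] (mod m)"
      unfolding w0 by (rule cong_mult[OF cong_refl IH0])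
    show "[(\<Sum>a\<in>A. \<omega> a * GG l A0 \<omega> r q s (\<lambda>k. u k + a * r s k)) = (\<Sum>a\<in>A. \<omega> a * 0)] (mod m)"
      by (rule cong_sum, rule cong_mult[OF cong_refl], rule IHa)
  qed
  show ?case unfolding eqG using cg by simp
qed

theorem theorem1:
  fixes p l :: nat and e :: "nat \<Rightarrow> nat" and A :: "nat set"
  assumes "prime p"
    and "l \<ge> 1"
    and "\<forall>i<l. 1 \<le> e i"
    and "\<forall>i j. i \<le> j \<longrightarrow> j < l \<longrightarrow> e i \<le> e j"
    and "A \<noteq> {}"
    and "A \<subseteq> {1..p ^ e (l - 1)}"
    and "\<forall>a\<in>A. \<not> p dvd a"
    and "\<forall>a\<in>A. \<forall>b\<in>A. a \<noteq> b \<longrightarrow> a mod p \<noteq> b mod p"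
  shows "int (dA l (\<lambda>i. p ^ e i) A)
           \<le> ceiling ((1 + (\<Sum>i<l. (real (p ^ e i) - 1))) / real (card A))"
proof -
  note p = assms(1)
  have p1: "p > 1" using p prime_gt_1_nat by blast
  define q where "q i = p ^ e i" for i
  have q1: "q i \<ge> 1" for i unfolding q_def using p1 by simp
  have finA: "finite A" using assms(6) finite_subset by blast
  define n where "n = card A"
  have n1: "n \<ge> 1" using finA assms(5) n_def by (simp add: Suc_le_eq card_gt_0_iff)
  have np: "n \<le> p"
  proof -
    have "card A \<le> card {..<p}"
    proof (rule card_inj_on_le)
      show "inj_on (\<lambda>a. a mod p) A"
      proof (rule inj_onI)
        fix a b assume "a \<in> A" "b \<in> A" "a mod p = b mod p"
        then show "a = b" using assms(8) by metis
      qed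
      show "(\<lambda>a. a mod p) ` A \<subseteq> {..<p}" using p1 by auto
    qed simp
    then show ?thesis unfolding n_def by simp
  qed
  have A0n: "0 \<notin> A" using assms(6) by auto
  define N where "N = (\<Sum>i<l. q i - 1)"
  have realsum: "(\<Sum>i<l. (real (p ^ e i) - 1)) = real N"
    unfolding N_def of_nat_sum using q1 by (intro sum.cong refl) (simp add: of_nat_diff q_def)
  define t0 where "t0 = ceiling ((1 + real N) / real n)"
  have t0n: "real_of_int t0 * real n \<ge> 1 + real N"
  proof -
    have "(1 + real N) / real n \<le> real_of_int t0" unfolding t0_def by (rule le_of_int_ceiling)
    then show ?thesis using n1 by (simp add: divide_le_eq)
  qed
  have t0pos: "t0 \<ge> 1"
  proof -
    have "0 < (1 + real N) / real n" using n1 by simp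
    also have "\<dots> \<le> real_of_int t0" unfolding t0_def by (rule le_of_int_ceiling)
    finally show ?thesis by simp
  qed
  define t where "t = nat t0"
  have t1: "t \<ge> 1" using t0pos t_def by simp
  have tn: "N < t * n"
  proof -
    have "real t = real_of_int t0" using t0pos t_def by simp
    then have "real (t * n) \<ge> 1 + real N" using t0n by simp
    then show ?thesis by linarith
  qed
  have allg: "has_A_zero_sum l (\<lambda>i. p ^ e i) A t g" for g
  proof (rule ccontr)
    assume nz: "\<not> has_A_zero_sum l (\<lambda>i. p ^ e i) A t g"
    have dist: "\<forall>a\<in>A. \<forall>b\<in>A. a \<noteq> b \<longrightarrow> \<not> int p dvd (int a - int b)"
    proof (intro ballI impI notI)
      fix a b assume a: "a \<in> A" and b: "b \<in> A" and ab: "a \<noteq> b" and d: "int p dvd (int a - int b)"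
      then have "int a mod int p = int b mod int p" by (simp only: mod_eq_dvd_iff)
      then have "int (a mod p) = int (b mod p)" by (simp only: of_nat_mod)
      then have "a mod p = b mod p" by simp
      moreover have "a mod p \<noteq> b mod p" using assms(8) a b ab by simp
      ultimately show False by contradiction
    qed
    obtain c where c: "\<forall>j<card A. [(0::int)^j + (\<Sum>a\<in>A. c a * int a ^ j) = 0] (mod int p)"
      using weights_exist[OF p finA dist] by (elim exE) blast
    define A0 where "A0 = insert 0 A"
    define \<omega> where "\<omega> x = (if x = 0 then 1 else c x)" for x
    define r where "r i k = nat (g i k mod int (q k))" for i k
    have rint: "int (r i k) = g i k mod int (q k)" for i k
      unfolding r_def using q1[of k] by simp
    have ch0: "int (0 choose j) = (if j = 0 then 1 else 0)" for j by (cases j) simp_all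
    have Tz: "[(\<Sum>x\<in>A0. \<omega> x * (\<Prod>k<l. int (x * r s k choose \<gamma> k))) = 0] (mod int p)"
      if sm: "(\<Sum>k<l. \<gamma> k) < n" for s \<gamma>
    proof -
      have "(\<Sum>x\<in>A0. \<omega> x * (\<Prod>k<l. int (x * r s k choose \<gamma> k)))
          = \<omega> 0 * (\<Prod>k<l. int (0 * r s k choose \<gamma> k)) + (\<Sum>a\<in>A. \<omega> a * (\<Prod>k<l. int (a * r s k choose \<gamma> k)))"
        unfolding A0_def by (rule sum.insert[OF finA A0n])
      also have "\<dots> = (if \<forall>k<l. \<gamma> k = 0 then 1 else 0) + (\<Sum>a\<in>A. c a * (\<Prod>k<l. int (a * r s k choose \<gamma> k)))"
      proof -
        have "(\<Prod>k<l. int (0 * r s k choose \<gamma> k)) = (if \<forall>k<l. \<gamma> k = 0 then 1 else 0)"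
          unfolding mult_zero_left ch0 by (rule prod_indicator)
        moreover have "(\<Sum>a\<in>A. \<omega> a * (\<Prod>k<l. int (a * r s k choose \<gamma> k))) = (\<Sum>a\<in>A. c a * (\<Prod>k<l. int (a * r s k choose \<gamma> k)))"
          using A0n by (intro sum.cong refl) (auto simp: \<omega>_def)
        moreover have "\<omega> 0 = 1" unfolding \<omega>_def by simp
        ultimately show ?thesis by (simp only: mult_1)
      qed
      finally have eq: "(\<Sum>x\<in>A0. \<omega> x * (\<Prod>k<l. int (x * r s k choose \<gamma> k))) = (if \<forall>k<l. \<gamma> k = 0 then 1 else 0) + (\<Sum>a\<in>A. c a * (\<Prod>k<l. int (a * r s k choose \<gamma> k)))" .
      have "[(if \<forall>k<l. \<gamma> k = 0 then 1 else 0) + (\<Sum>a\<in>A. c a * (\<Prod>k<l. int (a * r s k choose \<gamma> k))) = 0] (mod int p)"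
        using T_cong[OF p np[unfolded n_def] c sm[unfolded n_def], where r="r s"] .
      then show ?thesis unfolding eq .
    qed
    have FFv: "[FF l A0 \<omega> r t (\<lambda>_. 0) \<alpha> = 0] (mod int p)" if "(\<Sum>k<l. \<alpha> k) < t * n" for \<alpha>
      by (rule FF_val[OF Tz that])
    have G0: "[GG l A0 \<omega> r q t (\<lambda>_. 0) = 0] (mod int p)"
    proof -
      have "[GG l A0 \<omega> r q t (\<lambda>_. 0) = (\<Sum>\<alpha>\<in>PiE {..<l} (\<lambda>k. {..<q k}). (-1)^(\<Sum>k<l. \<alpha> k) * 0)] (mod int p)"
        unfolding GG_def
      proof (rule cong_sum, rule cong_mult[OF cong_refl], rule FFv)
        fix \<alpha> assume \<alpha>: "\<alpha> \<in> PiE {..<l} (\<lambda>k. {..<q k})"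
        have "(\<Sum>k<l. \<alpha> k) \<le> (\<Sum>k<l. q k - 1)"
        proof (rule sum_mono)
          fix k assume "k \<in> {..<l}"
          then have "\<alpha> k < q k" using \<alpha> by (simp add: PiE_iff)
          then show "\<alpha> k \<le> q k - 1" by simp
        qed
        then show "(\<Sum>k<l. \<alpha> k) < t * n" using tn N_def by simp
      qed
      then show ?thesis by simp
    qed
    have Phi: "[(\<Sum>j<q k. (-1)^j * int (h choose j)) = (if q k dvd h then 1 else 0)] (mod int p)"
      if "k < l" for k h
      unfolding q_def using alt_sum_cong[OF p, of "e k" h] assms(3) that by simp
    have K: "\<forall>w. (\<forall>i<t. w i \<in> A0) \<longrightarrow> (\<forall>k<l. q k dvd ((\<lambda>_. 0) k + (\<Sum>i<t. w i * r i k))) \<longrightarrow> (\<forall>i<t. w i = 0)"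
    proof (intro allI impI)
      fix w i assume wA: "\<forall>i<t. w i \<in> A0" and d: "\<forall>k<l. q k dvd ((\<lambda>_. 0) k + (\<Sum>i<t. w i * r i k))" and i: "i < t"
      show "w i = 0"
      proof (rule ccontr)
        assume wi: "w i \<noteq> 0"
        define I where "I = {j \<in> {0..<t}. w j \<noteq> 0}"
        have "has_A_zero_sum l (\<lambda>i. p ^ e i) A t g"
          unfolding has_A_zero_sum_def
        proof (intro exI conjI)
          have "i \<in> I" using i wi unfolding I_def by simp
          then show "I \<noteq> {}" by blast
          show "I \<subseteq> {0..<t}" unfolding I_def by (rule subsetI) simp
          show "\<forall>j\<in>I. w j \<in> A"
          proof
            fix j assume "j \<in> I"
            then have j: "j < t" "w j \<noteq> 0" unfolding I_def by simp_all
            have "w j \<in> insert 0 A" using wA[rule_format, OF j(1)] unfolding A0_def .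
            then show "w j \<in> A" using j by simp
          qed
          show "\<forall>k<l. int (p ^ e k) dvd (\<Sum>j\<in>I. int (w j) * g j k)"
          proof (intro allI impI)
            fix k assume k: "k < l"
            have s1: "(\<Sum>j\<in>I. int (w j) * g j k) = (\<Sum>j<t. int (w j) * g j k)"
            proof (rule sum.mono_neutral_left)
              show "I \<subseteq> {..<t}" unfolding I_def by (rule subsetI) simp
              show "\<forall>j\<in>{..<t} - I. int (w j) * g j k = 0"
              proof
                fix j assume "j \<in> {..<t} - I"
                then have "w j = 0" unfolding I_def by simp
                then show "int (w j) * g j k = 0" by simp
              qed
            qed simp
            have s2: "[(\<Sum>j<t. int (w j) * g j k) = (\<Sum>j<t. int (w j) * int (r j k))] (mod int (q k))"
            proof (rule cong_sum)
              fix j assume "j \<in> {..<t}"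
              have "[g j k = int (r j k)] (mod int (q k))" unfolding rint cong_def by (simp only: mod_mod_trivial)
              then show "[int (w j) * g j k = int (w j) * int (r j k)] (mod int (q k))" by (rule cong_mult[OF cong_refl])
            qed
            have s3: "(\<Sum>j<t. int (w j) * int (r j k)) = int (\<Sum>j<t. w j * r j k)" by (simp only: of_nat_sum of_nat_mult)
            have "q k dvd (\<Sum>j<t. w j * r j k)" using d k by simp
            then have "int (q k) dvd int (\<Sum>j<t. w j * r j k)" by (simp only: int_dvd_int_iff)
            then have "int (q k) dvd (\<Sum>j<t. int (w j) * int (r j k))" unfolding s3 .
            then have "int (q k) dvd (\<Sum>j<t. int (w j) * g j k)" using cong_dvd_iff[OF s2] by (simp only:)
            then show "int (p ^ e k) dvd (\<Sum>j\<in>I. int (w j) * g j k)" unfolding s1 q_def .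
          qed
        qed
        with nz show False by contradiction
      qed
    qed
    have G1: "[GG l A0 \<omega> r q t (\<lambda>_. 0) = (if \<forall>k<l. q k dvd (\<lambda>_. 0) k then 1 else 0)] (mod int p)"
      by (rule GG_inv[OF A0_def A0n finA _ Phi K]) (simp add: \<omega>_def)
    then have "[GG l A0 \<omega> r q t (\<lambda>_. 0) = 1] (mod int p)" by simp
    then have "[0 = 1] (mod int p)" using cong_trans[OF cong_sym[OF G0]] by blast
    then have "int p dvd 0 - 1" by (simp only: cong_iff_dvd_diff)
    then have "int p dvd 1" by (simp only: diff_0 dvd_minus_iff)
    then have "int p \<le> 1" by (intro zdvd_imp_le) simp_all
    then show False using p1 by simp
  qed
  have "dA l (\<lambda>i. p ^ e i) A \<le> t"
    unfolding dA_def by (rule Least_le) (intro conjI allI t1 allg)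
  then have "int (dA l (\<lambda>i. p ^ e i) A) \<le> t0" using t_def t0pos by simp
  then show ?thesis unfolding realsum t0_def n_def .
qed

end
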